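(* Let $t\ge1$, $F=\mathbb{F}_{2^t}$, $A\subseteq F$ with $|A|=n\le 2^t$, and let $k$ satisfy $r=n-k\ge 2$. Let $\alpha^*\in A$, choose $z_1,\dots,z_t\in F$ such that $\beta_i:=\alpha^*-z_i$ ($i=1,\dots,t$) form a basis of $F$ over $\mathbb{F}_2$, and set $g_i(x)=\beta_i(x-z_i)$. Then the check polynomials $g_1,\dots,g_t$ yield a linear repair scheme over $\mathbb{F}_2$ for the codeword symbol $f(\alpha^* )$ of the Reed-Solomon code $\mathrm{RS}(A,k)$ with repair bandwidth at most $(n-1)(t-1)$ bits. Moreover, when $n=|F|=2^t$ and $r=2$, this repair bandwidth is optimal, i.e. no linear repair scheme over $\mathbb{F}_2$ for a single erased symbol has bandwidth smaller than $(n-1)(t-1)$ bits.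
   Context: $\mathrm{RS}(A,k)=\{(f(\alpha))_{\alpha\in A} : f\in F[x],\ \deg f<k\}$, with $f(\alpha)$ stored at node $\alpha$. Every polynomial $g\in F[x]$ of degree at most $r-1$ gives a dual codeword (a check), i.e. $\sum_{\alpha\in A}\lambda_\alpha g(\alpha)f(\alpha)=0$ for fixed nonzero multipliers $\lambda_\alpha$. Given checks $g_1,\dots,g_t$ of degree at most $r-1$ with $\mathrm{rank}_{\mathbb{F}_2}\{g_i(\alpha^* )\}_i=t$, one obtains a linear repair scheme over $\mathbb{F}_2$: applying the trace $\mathrm{Tr}_{F/\mathbb{F}_2}$ to the check equations, the replacement node recovers the $t$ independent traces $\mathrm{Tr}(\lambda_{\alpha^*}g_i(\alpha^* )f(\alpha^* ))$ by downloading from node $\alpha\ne\alpha^*$ exactly $b_\alpha=\mathrm{rank}_{\mathbb{F}_2}\{g_1(\alpha),\dots,g_t(\alpha)\}$ sub-symbols; the repair bandwidth is $\sum_{\alpha\ne\alpha^*}b_\alpha$ sub-symbols. In general a linear repair scheme over $\mathbb{F}_2$ is one where each node sends $\mathbb{F}_2$-linear functions of its symbol and $f(\alpha^* )$ is recovered $\mathbb{F}_2$-linearly; its bandwidth is the total number of bits downloaded. *)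

theory Defs
  imports "HOL-Computational_Algebra.Polynomial" "HOL-Library.Z2"
begin

text \<open>F_2-linear independence of a set of field elements (in characteristic 2 an
  F_2-linear combination is just a subset sum).\<close>
definition f2_indep :: "'a::field set \<Rightarrow> bool" where
  "f2_indep S \<longleftrightarrow> finite S \<and> (\<forall>T\<subseteq>S. (\<Sum>x\<in>T. x) = 0 \<longrightarrow> T = {})"

definition f2_rank :: "'a::field set \<Rightarrow> nat" where
  "f2_rank X = Max {card S | S. S \<subseteq> X \<and> f2_indep S}"

definition f2_basis :: "nat \<Rightarrow> (nat \<Rightarrow> 'a::field) \<Rightarrow> bool" where
  "f2_basis t \<beta> \<longleftrightarrow>
     (\<forall>S\<subseteq>{1..t}. (\<Sum>i\<in>S. \<beta> i) = 0 \<longrightarrow> S = {}) \<and>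
     (\<forall>x::'a. \<exists>S\<subseteq>{1..t}. x = (\<Sum>i\<in>S. \<beta> i))"

text \<open>Reed-Solomon code RS(A,k): evaluation vectors of polynomials of degree < k
  (the zero polynomial included; for k = 0 this is the zero code). Only the values
  on A are ever read.\<close>
definition rs_code :: "'a::field set \<Rightarrow> nat \<Rightarrow> ('a \<Rightarrow> 'a) set" where
  "rs_code A k = {(\<lambda>\<alpha>. poly f \<alpha>) | f. \<forall>i\<ge>k. coeff f i = 0}"

text \<open>A linear repair scheme over F_2 for node a0 of the code C with evaluation set A:
  node alpha (alpha in A, alpha \<noteq> a0) sends b alpha bits q alpha j (c alpha), j < b alpha,
  each an F_2-linear function of its symbol; the lost symbol c a0 is recovered by an
  F_2-linear map R from the downloaded bits (unused coordinates are set to 0).\<close>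
definition download ::
  "'a set \<Rightarrow> 'a \<Rightarrow> ('a \<Rightarrow> nat) \<Rightarrow> ('a \<Rightarrow> nat \<Rightarrow> 'a \<Rightarrow> bit) \<Rightarrow> ('a \<Rightarrow> 'a) \<Rightarrow> ('a \<Rightarrow> nat \<Rightarrow> bit)" where
  "download A a0 b q c = (\<lambda>\<alpha> j. if \<alpha> \<in> A - {a0} \<and> j < b \<alpha> then q \<alpha> j (c \<alpha>) else 0)"

definition linear_repair_scheme ::
  "'a::field set \<Rightarrow> ('a \<Rightarrow> 'a) set \<Rightarrow> 'a \<Rightarrow> ('a \<Rightarrow> nat) \<Rightarrow> ('a \<Rightarrow> nat \<Rightarrow> 'a \<Rightarrow> bit)
     \<Rightarrow> (('a \<Rightarrow> nat \<Rightarrow> bit) \<Rightarrow> 'a) \<Rightarrow> bool" where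
  "linear_repair_scheme A C a0 b q R \<longleftrightarrow>
     (\<forall>\<alpha> j x y. q \<alpha> j (x + y) = q \<alpha> j x + q \<alpha> j y) \<and>
     (\<forall>d e. R (\<lambda>\<alpha> j. d \<alpha> j + e \<alpha> j) = R d + R e) \<and>
     (\<forall>c\<in>C. R (download A a0 b q c) = c a0)"

definition bandwidth :: "'a set \<Rightarrow> 'a \<Rightarrow> ('a \<Rightarrow> nat) \<Rightarrow> nat" where
  "bandwidth A a0 b = (\<Sum>\<alpha>\<in>A - {a0}. b \<alpha>)"

end

theory Submission
  imports Defs "HOL-Library.FuncSet"
begin


lemma c2_self: "(1::'a::ring_1) + 1 = 0 \<Longrightarrow> x + x = (0::'a)"
  by (metis distrib_left mult.right_neutral mult_zero_right)

lemma c2_neg: "(1::'a::ring_1) + 1 = 0 \<Longrightarrow> - x = (x::'a)"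
  using c2_self[of x] by (metis minus_unique)

lemma c2_eq: "(1::'a::ring_1) + 1 = 0 \<Longrightarrow> (x + y = 0) = (x = (y::'a))"
  by (metis add.commute c2_neg minus_unique neg_eq_iff_add_eq_0)

lemma c2_minus: "(1::'a::ring_1) + 1 = 0 \<Longrightarrow> x - y = x + (y::'a)"
  by (metis c2_neg diff_conv_add_uminus)

lemma sum_symdiff:
  assumes c: "(1::'a::ring_1) + 1 = 0" and "finite P" "finite Q"
  shows "sum (f::_\<Rightarrow>'a) ((P - Q) \<union> (Q - P)) = sum f P + sum f Q"
proof -
  have "sum f P = sum f (P - Q) + sum f (P \<inter> Q)"
    using assms sum.Int_Diff[of P f Q] by (simp add: add.commute)
  moreover have "sum f Q = sum f (Q - P) + sum f (P \<inter> Q)"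
    using assms sum.Int_Diff[of Q f P] by (simp add: add.commute Int_commute)
  moreover have "sum f ((P - Q) \<union> (Q - P)) = sum f (P - Q) + sum f (Q - P)"
    using assms by (intro sum.union_disjoint) auto
  ultimately show ?thesis using c2_self[OF c, of "sum f (P \<inter> Q)"] by (simp add: algebra_simps)
qed

lemma sum_closed:
  assumes "finite P" "0 \<in> G" "\<And>x y. x \<in> G \<Longrightarrow> y \<in> G \<Longrightarrow> x + y \<in> G"
    "\<And>x. x \<in> P \<Longrightarrow> f x \<in> G"
  shows "sum f P \<in> G"
  using assms by (induction P rule: finite_induct) auto

lemma indep_card:
  fixes S :: "'a::field set"
  assumes c: "(1::'a) + 1 = 0" and ind: "f2_indep S" and G: "finite G" "S \<subseteq> G" "0 \<in> G"
    "\<And>x y. x \<in> G \<Longrightarrow> y \<in> G \<Longrightarrow> x + y \<in> G"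
  shows "2 ^ card S \<le> card G"
proof -
  have fS: "finite S" using ind by (simp add: f2_indep_def)
  have inj: "inj_on (\<lambda>P. sum id P) (Pow S)"
  proof (rule inj_onI)
    fix P Q assume P: "P \<in> Pow S" and Q: "Q \<in> Pow S" and e: "sum id P = sum id Q"
    have fP: "finite P" "finite Q" using P Q fS by (auto intro: finite_subset)
    have "sum id ((P - Q) \<union> (Q - P)) = 0"
      using sum_symdiff[OF c fP, of id] e c2_self[OF c] by simp
    moreover have "(P - Q) \<union> (Q - P) \<subseteq> S" using P Q by auto
    moreover have "\<forall>T\<subseteq>S. sum (\<lambda>x. x) T = 0 \<longrightarrow> T = {}" using ind unfolding f2_indep_def by blast
    ultimately have "(P - Q) \<union> (Q - P) = {}" by (metis id_apply sum.cong)
    then show "P = Q" by auto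
  qed
  have "(\<lambda>P. sum id P) ` Pow S \<subseteq> G"
  proof
    fix y assume "y \<in> (\<lambda>P. sum id P) ` Pow S"
    then obtain P where "P \<subseteq> S" "y = sum id P" by auto
    then show "y \<in> G" using sum_closed[of P G id] G fS \<open>P \<subseteq> S\<close> by (auto intro: finite_subset)
  qed
  then have "card ((\<lambda>P. sum id P) ` Pow S) \<le> card G" using G by (simp add: card_mono)
  then show ?thesis using card_image[OF inj] fS by (simp add: card_Pow)
qed

lemma rank_le:
  fixes X :: "'a::field set"
  assumes "finite X" "\<And>S. S \<subseteq> X \<Longrightarrow> f2_indep S \<Longrightarrow> card S \<le> m"
  shows "f2_rank X \<le> m"
proof -
  have fin: "finite {card S | S. S \<subseteq> X \<and> f2_indep S}"
    by (rule finite_subset[of _ "card ` Pow X"]) (use assms(1) in auto)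
  have ne: "{card S | S. S \<subseteq> X \<and> f2_indep S} \<noteq> {}"
    by (auto simp: f2_indep_def intro!: exI[of _ "{}"])
  show ?thesis unfolding f2_rank_def using fin ne assms(2) by (subst Max_le_iff) auto
qed

lemma rank_ge:
  fixes X :: "'a::field set"
  assumes "finite X" "S \<subseteq> X" "f2_indep S"
  shows "card S \<le> f2_rank X"
proof -
  have fin: "finite {card S | S. S \<subseteq> X \<and> f2_indep S}"
    by (rule finite_subset[of _ "card ` Pow X"]) (use assms(1) in auto)
  show ?thesis unfolding f2_rank_def using fin assms by (intro Max_ge) auto
qed

lemma fiber_count:
  fixes h :: "'a::{ab_group_add,finite} \<Rightarrow> 'b"
  assumes "\<And>x y. h x = h y \<longleftrightarrow> x - y \<in> K"
  shows "card (UNIV :: 'a set) = card (h ` UNIV) * card K"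
proof -
  have U: "(UNIV :: 'a set) = (\<Union>y\<in>h ` UNIV. h -` {y})" by auto
  have fib: "card (h -` {y}) = card K" if "y \<in> h ` UNIV" for y
  proof -
    from that obtain x0 where y: "y = h x0" by blast
    have "h -` {y} = (\<lambda>k. x0 + k) ` K"
    proof (intro set_eqI iffI)
      fix x assume "x \<in> h -` {y}"
      then have "x - x0 \<in> K" using assms y by auto
      then show "x \<in> (\<lambda>k. x0 + k) ` K" by (auto intro!: image_eqI[of _ _ "x - x0"])
    next
      fix x assume "x \<in> (\<lambda>k. x0 + k) ` K"
      then obtain k where "k \<in> K" "x = x0 + k" by auto
      then show "x \<in> h -` {y}" using assms[of x x0] y by auto
    qed
    moreover have "inj_on (\<lambda>k. x0 + k) K" by (auto intro: inj_onI)
    ultimately show ?thesis by (simp add: card_image)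
  qed
  have "card (UNIV :: 'a set) = (\<Sum>y\<in>h ` UNIV. card (h -` {y}))"
    by (subst U, rule card_UN_disjoint) auto
  also have "\<dots> = card (h ` UNIV) * card K" using fib by simp
  finally show ?thesis .
qed

lemma card_bit: "card (UNIV :: bit set) = 2"
proof -
  have "(UNIV :: bit set) = {0, 1}" by (auto intro: bit.exhaust)
  moreover have "card {0::bit, 1} = 2" by simp
  ultimately show ?thesis by simp
qed

lemma finite_bit: "finite (UNIV :: bit set)"
proof -
  have "(UNIV :: bit set) = {0, 1}" by (auto intro: bit.exhaust)
  then show ?thesis by (metis finite.emptyI finite.insertI)
qed

lemma card_bitvec: "finite I \<Longrightarrow> card (PiE I (\<lambda>_. UNIV :: bit set)) = 2 ^ card I"
  by (simp add: card_PiE card_bit)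

lemma lin_prod_coeffs:
  fixes B :: "'a::field set"
  assumes "finite B"
  shows "degree (\<Prod>b\<in>B. [:-b,1:]) = card B \<and> coeff (\<Prod>b\<in>B. [:-b,1:]) (card B) = 1
     \<and> (card B \<ge> 1 \<longrightarrow> coeff (\<Prod>b\<in>B. [:-b,1:]) (card B - 1) = - sum id B)"
  using assms
proof (induction B rule: finite_induct)
  case empty
  then show ?case by simp
next
  case (insert b B)
  define P where "P = (\<Prod>b\<in>B. [:-b,1:])"
  have P: "degree P = card B" "coeff P (card B) = 1"
    "card B \<ge> 1 \<Longrightarrow> coeff P (card B - 1) = - sum id B"
    using insert.IH by (auto simp: P_def)
  have Pnz: "P \<noteq> 0" using P(2) by auto
  have eq: "(\<Prod>b\<in>insert b B. [:-b,1:]) = smult (-b) P + pCons 0 P"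
    using insert.hyps by (simp add: P_def mult_pCons_left)
  have d: "degree (smult (-b) P + pCons 0 P) = Suc (card B)"
  proof -
    have "degree (pCons 0 P) = Suc (card B)" using P Pnz by simp
    moreover have "degree (smult (-b) P) < Suc (card B)" using P by simp
    ultimately show ?thesis by (metis degree_add_eq_right)
  qed
  have c1: "coeff (smult (-b) P + pCons 0 P) (Suc (card B)) = 1"
    using P by (simp add: coeff_eq_0)
  have c2: "coeff (smult (-b) P + pCons 0 P) (card B) = - sum id (insert b B)"
  proof (cases "card B = 0")
    case True
    then have "B = {}" using insert.hyps by simp
    then show ?thesis using P by simp
  next
    case False
    then obtain m where m: "card B = Suc m" by (cases "card B") auto
    have "coeff (smult (-b) P + pCons 0 P) (card B) = -b + coeff P m"
      using P m by simp
    also have "\<dots> = - sum id (insert b B)" using P(3) m insert.hyps by simp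
    finally show ?thesis .
  qed
  show ?case using eq d c1 c2 insert.hyps by simp
qed

definition lagr :: "'a::field set \<Rightarrow> 'a \<Rightarrow> 'a poly" where
  "lagr A a = (\<Prod>b\<in>A-{a}. [:-b,1:])"
definition mu :: "'a::field set \<Rightarrow> 'a \<Rightarrow> 'a" where
  "mu A a = (\<Prod>b\<in>A-{a}. a - b)"

lemma poly_lagr: "poly (lagr A a) x = (\<Prod>b\<in>A-{a}. x - b)"
  by (simp add: lagr_def poly_prod)

lemma lagr_at: "poly (lagr A a) a = mu A a"
  by (simp add: poly_lagr mu_def)

lemma lagr_zero: "finite A \<Longrightarrow> x \<in> A \<Longrightarrow> x \<noteq> a \<Longrightarrow> poly (lagr A a) x = 0"
  unfolding poly_lagr by (rule prod_zero) auto

lemma mu_nz: "finite A \<Longrightarrow> mu A a \<noteq> 0"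
  unfolding mu_def by (subst prod_zero_iff) auto

lemma lagr_coeffs:
  assumes "finite A" "a \<in> A"
  shows "degree (lagr A a) = card A - 1" "coeff (lagr A a) (card A - 1) = 1"
    "card A \<ge> 2 \<Longrightarrow> coeff (lagr A a) (card A - 2) = - (sum id A - a)"
proof -
  have cA: "card (A - {a}) = card A - 1" using assms by simp
  note L = lin_prod_coeffs[of "A - {a}"]
  show "degree (lagr A a) = card A - 1" "coeff (lagr A a) (card A - 1) = 1"
    using L assms cA by (auto simp: lagr_def)
  assume "card A \<ge> 2"
  then have "card (A - {a}) \<ge> 1" "card (A-{a}) - 1 = card A - 2" using cA by auto
  moreover have "sum id (A - {a}) = sum id A - a" using assms by (simp add: sum_diff1)
  ultimately show "coeff (lagr A a) (card A - 2) = - (sum id A - a)"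
    using L assms by (auto simp: lagr_def)
qed

lemma interp:
  fixes h :: "'a::field poly"
  assumes "finite A" "degree h < card A"
  shows "h = (\<Sum>a\<in>A. smult (poly h a / mu A a) (lagr A a))"
proof (rule poly_eqI_degree[of A])
  fix x assume x: "x \<in> A"
  have "poly (\<Sum>a\<in>A. smult (poly h a / mu A a) (lagr A a)) x
      = (\<Sum>a\<in>A. poly h a / mu A a * poly (lagr A a) x)" by (simp add: poly_sum)
  also have "\<dots> = (\<Sum>a\<in>A. if a = x then poly h x else 0)"
    by (rule sum.cong) (auto simp: lagr_zero assms x lagr_at mu_nz)
  also have "\<dots> = poly h x" using x assms by simp
  finally show "poly h x = poly (\<Sum>a\<in>A. smult (poly h a / mu A a) (lagr A a)) x" by simp
next
  show "degree h < card A" by fact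
  show "degree (\<Sum>a\<in>A. smult (poly h a / mu A a) (lagr A a)) < card A"
  proof -
    have "card A > 0" using assms by auto
    have "degree (\<Sum>a\<in>A. smult (poly h a / mu A a) (lagr A a)) \<le> card A - 1"
    proof (rule degree_sum_le)
      fix a assume "a \<in> A"
      then show "degree (smult (poly h a / mu A a) (lagr A a)) \<le> card A - 1"
        using lagr_coeffs(1)[OF assms(1) \<open>a\<in>A\<close>] degree_smult_le by (metis)
    qed (use assms in auto)
    then show ?thesis using \<open>card A > 0\<close> by linarith
  qed
qed

lemma dual_rel:
  fixes h :: "'a::field poly"
  assumes "finite A" "degree h < card A - 1"
  shows "(\<Sum>a\<in>A. poly h a / mu A a) = 0"
proof -
  have "coeff h (card A - 1) = 0" using assms by (simp add: coeff_eq_0)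
  also have "h = (\<Sum>a\<in>A. smult (poly h a / mu A a) (lagr A a))" using interp[OF assms(1)] assms(2) by simp
  finally have "(\<Sum>a\<in>A. poly h a / mu A a * coeff (lagr A a) (card A - 1)) = 0"
    by (simp add: coeff_sum)
  moreover have "(\<Sum>a\<in>A. poly h a / mu A a * coeff (lagr A a) (card A - 1)) = (\<Sum>a\<in>A. poly h a / mu A a)"
    by (rule sum.cong) (use lagr_coeffs(2)[OF assms(1)] in \<open>simp only:, simp\<close>)
  ultimately show ?thesis by simp
qed




lemma sq_add: "(1::'a::field) + 1 = 0 \<Longrightarrow> (x + y) * (x + y) = x * x + y * (y::'a)"
proof -
  assume c: "(1::'a) + 1 = 0"
  have "(x + y) * (x + y) = x * x + y * y + (x*y + x*y)" by (simp add: algebra_simps)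
  then show ?thesis using c2_self[OF c, of "x*y"] by simp
qed

lemma sq_inj: "(1::'a::field) + 1 = 0 \<Longrightarrow> x * x = y * y \<Longrightarrow> x = (y::'a)"
proof -
  assume c: "(1::'a) + 1 = 0" and e: "x * x = y * y"
  have "(x + y) * (x + y) = 0" using sq_add[OF c] e c2_self[OF c] by simp
  then have "x + y = 0" by simp
  then show ?thesis using c2_eq[OF c] by simp
qed

lemma sq_sum:
  assumes c: "(1::'a::field) + 1 = 0" and "finite S"
  shows "(\<Sum>i\<in>S. f i) * (\<Sum>i\<in>S. f i) = (\<Sum>i\<in>S. f i * (f i::'a))"
  using assms(2) by (induction S rule: finite_induct) (auto simp: sq_add[OF c])

lemma sq_surj: "(1::'a::{field,finite}) + 1 = 0 \<Longrightarrow> \<exists>s. y = s * (s::'a)"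
proof -
  assume c: "(1::'a) + 1 = 0"
  have "inj (\<lambda>s::'a. s * s)" using sq_inj[OF c] by (auto intro: injI)
  then have "surj (\<lambda>s::'a. s * s)" by (simp add: finite_UNIV_inj_surj)
  then show ?thesis by (metis surjD)
qed

lemma basis_unique:
  fixes \<beta> :: "nat \<Rightarrow> 'a::field"
  assumes c: "(1::'a) + 1 = 0" and b: "f2_basis t \<beta>" and S: "S \<subseteq> {1..t}" "S' \<subseteq> {1..t}"
    and e: "(\<Sum>i\<in>S. \<beta> i) = (\<Sum>i\<in>S'. \<beta> i)"
  shows "S = S'"
proof -
  have f: "finite S" "finite S'" using S by (auto intro: finite_subset)
  have "(\<Sum>i\<in>(S - S') \<union> (S' - S). \<beta> i) = 0"
    using sum_symdiff[OF c f, of \<beta>] e c2_self[OF c] by simp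
  moreover have "(S - S') \<union> (S' - S) \<subseteq> {1..t}" using S by auto
  moreover have h3: "\<forall>S\<subseteq>{1..t}. (\<Sum>i\<in>S. \<beta> i) = 0 \<longrightarrow> S = {}"
    using b unfolding f2_basis_def by (rule conjunct1)
  ultimately have "(S - S') \<union> (S' - S) = {}" using h3[rule_format] by blast
  then show ?thesis by auto
qed

lemma basis_inj:
  fixes \<beta> :: "nat \<Rightarrow> 'a::field"
  assumes c: "(1::'a) + 1 = 0" and b: "f2_basis t \<beta>"
  shows "inj_on \<beta> {1..t}"
proof (rule inj_onI)
  fix i j assume ij: "i \<in> {1..t}" "j \<in> {1..t}" "\<beta> i = \<beta> j"
  have "(\<Sum>k\<in>{i}. \<beta> k) = (\<Sum>k\<in>{j}. \<beta> k)" using ij by simp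
  then have "{i} = {j}" using basis_unique[OF c b, of "{i}" "{j}"] ij by auto
  then show "i = j" by simp
qed

lemma rank_sq:
  fixes \<beta> :: "nat \<Rightarrow> 'a::{field,finite}"
  assumes c: "(1::'a) + 1 = 0" and b: "f2_basis t \<beta>" and cardF: "card (UNIV::'a set) = 2 ^ t"
  shows "f2_rank ((\<lambda>i. \<beta> i * \<beta> i) ` {1..t}) = t"
proof (rule antisym)
  show "f2_rank ((\<lambda>i. \<beta> i * \<beta> i) ` {1..t}) \<le> t"
  proof (rule rank_le)
    fix S :: "'a set" assume "f2_indep S"
    then have "2 ^ card S \<le> card (UNIV :: 'a set)"
      by (rule indep_card[OF c]) auto
    then have "(2::nat) ^ card S \<le> 2 ^ t" by (simp only: cardF)
    then show "card S \<le> t" by (rule power_le_imp_le_exp[rotated]) simp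
  qed simp
next
  let ?X = "(\<lambda>i. \<beta> i * \<beta> i) ` {1..t}"
  have inj: "inj_on (\<lambda>i. \<beta> i * \<beta> i) {1..t}"
  proof (rule inj_onI)
    fix i j assume ij: "i \<in> {1..t}" "j \<in> {1..t}" "\<beta> i * \<beta> i = \<beta> j * \<beta> j"
    from ij(3) have "\<beta> i = \<beta> j" by (rule sq_inj[OF c])
    then show "i = j" using basis_inj[OF c b] ij(1,2) by (simp add: inj_on_eq_iff)
  qed
  have "f2_indep ?X"
    unfolding f2_indep_def
  proof (intro conjI allI impI)
    fix T assume T: "T \<subseteq> ?X" "sum (\<lambda>x. x) T = 0"
    define S' where "S' = {i\<in>{1..t}. \<beta> i * \<beta> i \<in> T}"
    have TS: "T = (\<lambda>i. \<beta> i * \<beta> i) ` S'" using T(1) by (auto simp: S'_def)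
    have "sum (\<lambda>x. x) T = (\<Sum>i\<in>S'. \<beta> i * \<beta> i)"
    proof -
      have "inj_on (\<lambda>i. \<beta> i * \<beta> i) S'" by (rule inj_on_subset[OF inj]) (auto simp: S'_def)
      then show ?thesis unfolding TS by (simp add: sum.reindex)
    qed
    also have "\<dots> = (\<Sum>i\<in>S'. \<beta> i) * (\<Sum>i\<in>S'. \<beta> i)"
      using sq_sum[OF c, of S' \<beta>] by (simp add: S'_def)
    finally have "(\<Sum>i\<in>S'. \<beta> i) = 0" using T(2) by simp
    moreover have "\<forall>S\<subseteq>{1..t}. (\<Sum>i\<in>S. \<beta> i) = 0 \<longrightarrow> S = {}"
      using b unfolding f2_basis_def by (rule conjunct1)
    moreover have "S' \<subseteq> {1..t}" by (auto simp: S'_def)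
    ultimately have "S' = {}" by simp
    then show "T = {}" using TS by simp
  qed simp
  then have "card ?X \<le> f2_rank ?X" by (intro rank_ge) auto
  then show "t \<le> f2_rank ?X" using card_image[OF inj] by simp
qed

lemma rank_L:
  fixes \<beta> :: "nat \<Rightarrow> 'a::{field,finite}"
  assumes c: "(1::'a) + 1 = 0" and cardF: "card (UNIV::'a set) = 2 ^ t" and t1: "t \<ge> 1"
    and d: "\<delta> \<noteq> 0"
  shows "f2_rank ((\<lambda>i. \<beta> i * \<beta> i + \<delta> * \<beta> i) ` {1..t}) \<le> t - 1"
proof -
  define L where "L = (\<lambda>x::'a. x * x + \<delta> * x)"
  have Ladd: "L (x + y) = L x + L y" for x y
    using sq_add[OF c, of x y] by (simp add: L_def algebra_simps)
  have Lker: "L x = L y \<longleftrightarrow> x - y \<in> {0, \<delta>}" for x y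
  proof -
    have "L x = L y \<longleftrightarrow> L (x - y) = 0"
      using Ladd[of "x - y" y] c2_eq[OF c, of "L (x - y)" 0] c2_eq[OF c]
      by (metis add_diff_cancel_right' c2_minus[OF c] diff_add_cancel)
    also have "L (x - y) = (x - y) * ((x - y) + \<delta>)" by (simp add: L_def algebra_simps)
    also have "\<dots> = 0 \<longleftrightarrow> x - y \<in> {0, \<delta>}" using c2_eq[OF c] by auto
    finally show ?thesis .
  qed
  have "card (UNIV :: 'a set) = card (L ` UNIV) * card {0, \<delta>}"
    using fiber_count[of L "{0, \<delta>}"] Lker by blast
  then have cG: "card (L ` UNIV) * 2 = 2 ^ t" using d cardF by simp
  show ?thesis
  proof (rule rank_le)
  fix S assume S: "S \<subseteq> (\<lambda>i. \<beta> i * \<beta> i + \<delta> * \<beta> i) ` {1..t}" "f2_indep S"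
  have "S \<subseteq> L ` UNIV" using S(1) by (auto simp: L_def)
  moreover have "0 \<in> L ` UNIV" by (auto simp: L_def intro!: image_eqI[of _ _ 0])
  moreover have "x + y \<in> L ` UNIV" if hxy: "x \<in> L ` UNIV" "y \<in> L ` UNIV" for x y
  proof -
    obtain a b where "x = L a" "y = L b" using hxy by blast
    then have "x + y = L (a + b)" using Ladd by simp
    then show ?thesis by simp
  qed
  ultimately have "2 ^ card S \<le> card (L ` UNIV)"
    using indep_card[OF c S(2), of "L ` UNIV"] by auto
  moreover have "card (L ` UNIV) = 2 ^ (t - 1)"
  proof -
    have "(2::nat) ^ t = 2 ^ (t - 1) * 2" using t1 by (cases t) auto
    then show ?thesis using cG by simp
  qed
  ultimately have "2 ^ card S \<le> (2::nat) ^ (t - 1)" by simp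
  then show "card S \<le> t - 1" by simp
  qed simp
qed



lemma bit_add_eq_self: "(a::bit) + c = c \<longleftrightarrow> a = 0"
  by (cases a; cases c) simp_all

lemma lower_bound:
  fixes A :: "'a::{field,finite} set" and a1 :: 'a
  assumes c: "(1::'a) + 1 = 0" and cardF: "card (UNIV::'a set) = 2 ^ t" and t1: "t \<ge> 1"
    and cardA: "card A = 2 ^ t" and kk: "k + 2 = 2 ^ t" and a1: "a1 \<in> A"
    and sch: "linear_repair_scheme A (rs_code A k) a1 b q R"
  shows "(2 ^ t - 1) * (t - 1) \<le> bandwidth A a1 b"
proof -
  have AU: "A = UNIV" using cardA cardF by (metis card_eq_UNIV_imp_eq_UNIV finite)
  have qadd: "q \<alpha> j (x + y) = q \<alpha> j x + q \<alpha> j y" for \<alpha> j x y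
    using sch unfolding linear_repair_scheme_def by blast
  have Radd: "R (\<lambda>\<alpha> j. d \<alpha> j + e \<alpha> j) = R d + R e" for d e
    using sch unfolding linear_repair_scheme_def by blast
  have Rrec: "R (download A a1 b q cw) = cw a1" if "cw \<in> rs_code A k" for cw
    using sch that unfolding linear_repair_scheme_def by blast
  have R0: "R (\<lambda>\<alpha> j. 0) = 0"
  proof -
    have "R (\<lambda>\<alpha> j. 0) = R (\<lambda>\<alpha> j. 0) + R (\<lambda>\<alpha> j. 0)"
      using Radd[of "\<lambda>\<alpha> j. 0" "\<lambda>\<alpha> j. 0"] by simp
    then show ?thesis by (metis add_cancel_right_right)
  qed
  have q0: "q \<alpha> j 0 = 0" for \<alpha> j
    using qadd[of \<alpha> j 0 0] by (simp add: bit_add_eq_self)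
  define D where "D = UNIV - {a1}"
  have cD: "card D = 2 ^ t - 1" using cardF by (simp add: D_def card_Diff_singleton)
  define V where "V \<alpha> = {x. \<forall>j<b \<alpha>. q \<alpha> j x = 0}" for \<alpha>
  have V0: "0 \<in> V \<alpha>" for \<alpha> by (simp add: V_def q0)
  have Vadd: "x + y \<in> V \<alpha>" if "x \<in> V \<alpha>" "y \<in> V \<alpha>" for x y \<alpha>
    using that by (simp add: V_def qadd)
  have Vcard: "2 ^ t \<le> card (V \<alpha>) * 2 ^ b \<alpha>" for \<alpha>
  proof -
    define h where "h x = restrict (\<lambda>j. q \<alpha> j x) {..<b \<alpha>}" for x
    have "h x = h y \<longleftrightarrow> x - y \<in> V \<alpha>" for x y
    proof -
      have "h x = h y \<longleftrightarrow> (\<forall>j<b \<alpha>. q \<alpha> j x = q \<alpha> j y)"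
        unfolding h_def by (auto simp: restrict_def fun_eq_iff)
      also have "\<dots> \<longleftrightarrow> (\<forall>j<b \<alpha>. q \<alpha> j (x - y) = 0)"
      proof -
        have qs: "q \<alpha> j x = q \<alpha> j (x - y) + q \<alpha> j y" for j by (metis diff_add_cancel qadd)
        have "q \<alpha> j x = q \<alpha> j y \<longleftrightarrow> q \<alpha> j (x - y) = 0" for j using qs[of j] bit_add_eq_self by metis
        then show ?thesis by simp
      qed
      finally show ?thesis by (simp add: V_def)
    qed
    then have e: "card (UNIV::'a set) = card (h ` UNIV) * card (V \<alpha>)"
      by (intro fiber_count) blast
    have "h ` UNIV \<subseteq> PiE {..<b \<alpha>} (\<lambda>_. UNIV :: bit set)"
      unfolding h_def by (intro image_subsetI) (simp add: restrict_PiE_iff)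
    then have "card (h ` UNIV) \<le> 2 ^ b \<alpha>"
    proof -
      have "card (h ` UNIV) \<le> card (PiE {..<b \<alpha>} (\<lambda>_. UNIV :: bit set))"
        by (rule card_mono[OF _ \<open>h ` UNIV \<subseteq> _\<close>]) (rule finite_PiE, auto simp: finite_bit)
      also have "\<dots> = 2 ^ b \<alpha>" by (simp add: card_bitvec)
      finally show ?thesis .
    qed
    then show ?thesis using e cardF by (simp add: mult.commute)
  qed
  define mu' where "mu' = mu (UNIV::'a set)"
  have munz: "mu' x \<noteq> 0" for x by (simp add: mu'_def mu_nz)
  define E where "E \<alpha> = (\<lambda>v. (v / mu' \<alpha>, \<alpha> * v / mu' \<alpha>)) ` V \<alpha>" for \<alpha>
  define U where "U = {((\<Sum>\<beta>\<in>D. v \<beta> / mu' \<beta>), (\<Sum>\<beta>\<in>D. \<beta> * v \<beta> / mu' \<beta>)) | v. \<forall>\<beta>\<in>D. v \<beta> \<in> V \<beta>}"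
  have key: "w = 0" if hU: "(w, a1 * w) \<in> U" for w
  proof -
    obtain v where v: "\<forall>\<beta>\<in>D. v \<beta> \<in> V \<beta>" and s1: "(\<Sum>\<beta>\<in>D. v \<beta> / mu' \<beta>) = w"
      and s2: "(\<Sum>\<beta>\<in>D. \<beta> * v \<beta> / mu' \<beta>) = a1 * w"
      using hU unfolding U_def by auto
    define cv where "cv x = (if x = a1 then mu' a1 * w else v x)" for x
    have sumU: "(\<Sum>x\<in>UNIV. f x) = f a1 + (\<Sum>x\<in>D. f x)" for f :: "'a \<Rightarrow> 'a"
      unfolding D_def by (simp add: sum.remove[of UNIV a1])
    have sumD: "(\<Sum>x\<in>D. f (cv x)) = (\<Sum>x\<in>D. f (v x))" for f :: "'a \<Rightarrow> 'a"
      by (rule sum.cong) (auto simp: D_def cv_def)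
    have T1: "(\<Sum>x\<in>UNIV. cv x / mu' x) = 0"
    proof -
      have "(\<Sum>x\<in>UNIV. cv x / mu' x) = w + (\<Sum>x\<in>D. cv x / mu' x)"
        using munz[of a1] by (simp add: sumU cv_def)
      also have "(\<Sum>x\<in>D. cv x / mu' x) = w" using s1
        by (metis (no_types, lifting) D_def DiffD2 cv_def singletonI sum.cong)
      finally show ?thesis using c2_self[OF c] by simp
    qed
    have T2: "(\<Sum>x\<in>UNIV. x * cv x / mu' x) = 0"
    proof -
      have "(\<Sum>x\<in>UNIV. x * cv x / mu' x) = a1 * w + (\<Sum>x\<in>D. x * cv x / mu' x)"
        using munz[of a1] by (simp add: sumU cv_def)
      also have "(\<Sum>x\<in>D. x * cv x / mu' x) = a1 * w" using s2
        by (metis (no_types, lifting) D_def DiffD2 cv_def singletonI sum.cong)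
      finally show ?thesis using c2_self[OF c] by simp
    qed
    define p where "p = (\<Sum>x\<in>UNIV. smult (cv x / mu' x) (lagr (UNIV::'a set) x))"
    have pv: "poly p y = cv y" for y
    proof -
      have "poly p y = (\<Sum>x\<in>UNIV. cv x / mu' x * poly (lagr UNIV x) y)" by (simp add: p_def poly_sum)
      also have "\<dots> = (\<Sum>x\<in>UNIV. if x = y then cv y else 0)"
        by (rule sum.cong) (auto simp: lagr_zero lagr_at mu'_def mu_nz)
      finally show ?thesis by simp
    qed
    have N: "card (UNIV::'a set) \<ge> 2" using kk cardF by simp
    have pc: "coeff p j = 0" if hj: "j \<ge> k" for j
    proof -
      have cj: "coeff p j = (\<Sum>x\<in>UNIV. cv x / mu' x * coeff (lagr UNIV x) j)"
        by (simp add: p_def coeff_sum)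
      consider "j > card (UNIV::'a set) - 1" | "j = card (UNIV::'a set) - 1" | "j = card (UNIV::'a set) - 2"
        using hj kk cardF by linarith
      then show ?thesis
      proof cases
        case 1
        then have "coeff (lagr UNIV x) j = 0" for x :: 'a
          using lagr_coeffs(1)[of UNIV x] by (simp add: coeff_eq_0)
        then show ?thesis using cj by simp
      next
        case 2
        then have "coeff (lagr UNIV x) j = 1" for x :: 'a
          using lagr_coeffs(2)[of UNIV x] by simp
        then show ?thesis using cj T1 by simp
      next
        case 3
        then have cl: "coeff (lagr UNIV x) j = - (sum id UNIV - x)" for x :: 'a
          using lagr_coeffs(3)[of UNIV x] N by simp
        have "coeff p j = (\<Sum>x\<in>UNIV. x * cv x / mu' x - sum id UNIV * (cv x / mu' x))"
          unfolding cj
        proof (rule sum.cong[OF refl])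
          fix x :: 'a
          show "cv x / mu' x * coeff (lagr UNIV x) j = x * cv x / mu' x - sum id UNIV * (cv x / mu' x)"
            by (simp only: cl) (simp add: algebra_simps)
        qed
        also have "\<dots> = (\<Sum>x\<in>UNIV. x * cv x / mu' x) - sum id UNIV * (\<Sum>x\<in>UNIV. cv x / mu' x)"
          by (simp add: sum_subtractf sum_distrib_left)
        finally show ?thesis using T1 T2 by simp
      qed
    qed
    have cw: "cv \<in> rs_code A k"
      unfolding rs_code_def using pc pv by (auto intro!: exI[of _ p])
    have "download A a1 b q cv = (\<lambda>\<alpha> j. 0)"
    proof (intro ext)
      fix \<alpha> j
      show "download A a1 b q cv \<alpha> j = 0"
      proof (cases "\<alpha> \<in> A - {a1} \<and> j < b \<alpha>")
        case True
        then have "\<alpha> \<in> D" "cv \<alpha> = v \<alpha>" by (auto simp: D_def cv_def)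
        then show ?thesis using True v by (simp add: download_def V_def)
      next
        case False
        show ?thesis unfolding download_def by (rule if_not_P[OF False])
      qed
    qed
    then have "cv a1 = 0" using Rrec[OF cw] R0 by simp
    then show ?thesis using munz[of a1] by (simp add: cv_def)
  qed
  have finU: "finite U" by simp
  have cU: "card U \<le> 2 ^ t"
  proof -
    have "inj_on (\<lambda>(x, y). y - a1 * x) U"
    proof (rule inj_onI, clarify)
      fix x y x' y' assume u: "(x, y) \<in> U" "(x', y') \<in> U" and e: "y - a1 * x = y' - a1 * x'"
      obtain v where v: "\<forall>\<beta>\<in>D. v \<beta> \<in> V \<beta>" "x = (\<Sum>\<beta>\<in>D. v \<beta> / mu' \<beta>)" "y = (\<Sum>\<beta>\<in>D. \<beta> * v \<beta> / mu' \<beta>)"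
        using u(1) unfolding U_def by auto
      obtain v' where v': "\<forall>\<beta>\<in>D. v' \<beta> \<in> V \<beta>" "x' = (\<Sum>\<beta>\<in>D. v' \<beta> / mu' \<beta>)" "y' = (\<Sum>\<beta>\<in>D. \<beta> * v' \<beta> / mu' \<beta>)"
        using u(2) unfolding U_def by auto
      define vv where "vv \<beta> = v \<beta> + v' \<beta>" for \<beta>
      have "x - x' = (\<Sum>\<beta>\<in>D. vv \<beta> / mu' \<beta>)"
        using c2_minus[OF c] by (simp add: v v' vv_def sum.distrib add_divide_distrib)
      moreover have "y - y' = (\<Sum>\<beta>\<in>D. \<beta> * vv \<beta> / mu' \<beta>)"
        using c2_minus[OF c] by (simp add: v v' vv_def sum.distrib add_divide_distrib distrib_left)
      moreover have "\<forall>\<beta>\<in>D. vv \<beta> \<in> V \<beta>" using v v' Vadd by (simp add: vv_def)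
      ultimately have "(x - x', y - y') \<in> U" unfolding U_def by blast
      moreover have "y - y' = a1 * (x - x')" using e by (simp add: algebra_simps)
      ultimately have "x - x' = 0" using key[of "x - x'"] by simp
      then show "x = x' \<and> y = y'" using e by simp
    qed
    then have "card U = card ((\<lambda>(x, y). y - a1 * x) ` U)" by (simp add: card_image)
    also have "\<dots> \<le> card (UNIV :: 'a set)" by (rule card_mono) auto
    finally show ?thesis using cardF by simp
  qed
  have EU: "E \<alpha> \<subseteq> U" if "\<alpha> \<in> D" for \<alpha>
  proof
    fix u assume "u \<in> E \<alpha>"
    then obtain x where x: "x \<in> V \<alpha>" "u = (x / mu' \<alpha>, \<alpha> * x / mu' \<alpha>)" unfolding E_def by auto
    define v where "v \<beta> = (if \<beta> = \<alpha> then x else 0)" for \<beta>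
    have h1: "\<forall>\<beta>\<in>D. v \<beta> \<in> V \<beta>" using x V0 by (simp add: v_def)
    have h2: "(\<Sum>\<beta>\<in>D. v \<beta> / mu' \<beta>) = x / mu' \<alpha>"
    proof -
      have "(\<Sum>\<beta>\<in>D. v \<beta> / mu' \<beta>) = (\<Sum>\<beta>\<in>D. if \<beta> = \<alpha> then x / mu' \<alpha> else 0)"
        by (rule sum.cong) (auto simp: v_def)
      then show ?thesis using that by simp
    qed
    have h3: "(\<Sum>\<beta>\<in>D. \<beta> * v \<beta> / mu' \<beta>) = \<alpha> * x / mu' \<alpha>"
    proof -
      have "(\<Sum>\<beta>\<in>D. \<beta> * v \<beta> / mu' \<beta>) = (\<Sum>\<beta>\<in>D. if \<beta> = \<alpha> then \<alpha> * x / mu' \<alpha> else 0)"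
        by (rule sum.cong) (auto simp: v_def)
      then show ?thesis using that by simp
    qed
    have "u = ((\<Sum>\<beta>\<in>D. v \<beta> / mu' \<beta>), (\<Sum>\<beta>\<in>D. \<beta> * v \<beta> / mu' \<beta>))"
      using h2 h3 x(2) by simp
    then show "u \<in> U" unfolding U_def using h1 by blast
  qed
  have E0: "(0, 0) \<in> E \<alpha>" for \<alpha> using V0 by (force simp: E_def)
  have Edisj: "(E \<alpha> - {(0,0)}) \<inter> (E \<beta> - {(0,0)}) = {}" if "\<alpha> \<noteq> \<beta>" for \<alpha> \<beta>
  proof -
    have "u = (0, 0)" if "u \<in> E \<alpha>" "u \<in> E \<beta>" for u
    proof -
      obtain x where ux: "u = (x / mu' \<alpha>, \<alpha> * x / mu' \<alpha>)"
        using \<open>u \<in> E \<alpha>\<close> unfolding E_def by blast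
      obtain y where uy: "u = (y / mu' \<beta>, \<beta> * y / mu' \<beta>)"
        using \<open>u \<in> E \<beta>\<close> unfolding E_def by blast
      have p1: "x / mu' \<alpha> = y / mu' \<beta>" using ux uy by (metis fst_conv)
      have p2: "\<alpha> * x / mu' \<alpha> = \<beta> * y / mu' \<beta>" using ux uy by (metis snd_conv)
      then have "\<alpha> * (x / mu' \<alpha>) = \<beta> * (y / mu' \<beta>)" by (simp only: times_divide_eq_right)
      then have "\<alpha> * (x / mu' \<alpha>) = \<beta> * (x / mu' \<alpha>)" by (simp only: p1)
      then have "(\<alpha> - \<beta>) * (x / mu' \<alpha>) = 0" by (metis left_diff_distrib right_minus_eq)
      then have "x / mu' \<alpha> = 0" using \<open>\<alpha> \<noteq> \<beta>\<close> by simp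
      then show ?thesis using ux by simp
    qed
    then show ?thesis by blast
  qed
  have cE: "card (E \<alpha> - {(0,0)}) = card (V \<alpha>) - 1" for \<alpha>
  proof -
    have "inj_on (\<lambda>v. (v / mu' \<alpha>, \<alpha> * v / mu' \<alpha>)) (V \<alpha>)"
      using munz[of \<alpha>] by (auto intro!: inj_onI)
    then have "card (E \<alpha>) = card (V \<alpha>)" by (simp add: E_def card_image)
    then show ?thesis using E0[of \<alpha>] by (simp add: card_Diff_singleton)
  qed
  have sumV: "(\<Sum>\<alpha>\<in>D. card (V \<alpha>) - 1) \<le> 2 ^ t - 1"
  proof -
    have "(\<Sum>\<alpha>\<in>D. card (V \<alpha>) - 1) = card (\<Union>\<alpha>\<in>D. E \<alpha> - {(0,0)})"
      using cE Edisj by (subst card_UN_disjoint) auto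
    also have "\<dots> \<le> card (U - {(0,0)})"
      using EU by (intro card_mono) auto
    also have "\<dots> = card U - 1"
    proof -
      have "(0, 0) \<in> U"
        unfolding U_def by (rule CollectI, rule exI[of _ "\<lambda>_. 0"]) (simp add: V0)
      then show ?thesis by (simp add: card_Diff_singleton)
    qed
    finally show ?thesis using cU by simp
  qed
  have per: "t \<le> b \<alpha> + (card (V \<alpha>) - 1)" for \<alpha>
  proof (cases "b \<alpha> \<ge> t")
    case False
    then obtain e where e: "t = b \<alpha> + e" by (metis le_add_diff_inverse nle_le)
    have "2 ^ e * 2 ^ b \<alpha> \<le> card (V \<alpha>) * 2 ^ b \<alpha>" using Vcard[of \<alpha>] e by (simp add: power_add mult.commute)
    then have "2 ^ e \<le> card (V \<alpha>)" by simp
    moreover have "e < 2 ^ e" by simp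
    ultimately show ?thesis using e by linarith
  qed simp
  have "(\<Sum>\<alpha>\<in>D. t) \<le> (\<Sum>\<alpha>\<in>D. b \<alpha> + (card (V \<alpha>) - 1))" by (rule sum_mono) (rule per)
  also have "\<dots> = bandwidth A a1 b + (\<Sum>\<alpha>\<in>D. card (V \<alpha>) - 1)"
    by (simp add: sum.distrib bandwidth_def AU D_def)
  finally have "(2 ^ t - 1) * t \<le> bandwidth A a1 b + (2 ^ t - 1)"
    using sumV cD by simp
  moreover have "\<And>M B t::nat. M * t \<le> B + M \<Longrightarrow> M * (t - 1) \<le> B"
  proof -
    fix M B t :: nat assume h: "M * t \<le> B + M"
    have "M * (t - 1) = M * t - M * 1" by (rule diff_mult_distrib2)
    then show "M * (t - 1) \<le> B" using h by simp
  qed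
  ultimately show ?thesis by blast
qed



definition crd :: "nat \<Rightarrow> (nat \<Rightarrow> 'a::field) \<Rightarrow> 'a \<Rightarrow> nat set" where
  "crd t \<beta> x = (THE S. S \<subseteq> {1..t} \<and> x = (\<Sum>i\<in>S. \<beta> i))"

definition Tf :: "nat \<Rightarrow> (nat \<Rightarrow> 'a::field) \<Rightarrow> 'a \<Rightarrow> bit" where
  "Tf t \<beta> x = (if 1 \<in> crd t \<beta> x then 1 else 0)"

lemma crd_eq:
  fixes \<beta> :: "nat \<Rightarrow> 'a::field"
  assumes c: "(1::'a) + 1 = 0" and b: "f2_basis t \<beta>" and S: "S \<subseteq> {1..t}" "x = (\<Sum>i\<in>S. \<beta> i)"
  shows "crd t \<beta> x = S"
  unfolding crd_def
proof (rule the_equality)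
  show "S \<subseteq> {1..t} \<and> x = (\<Sum>i\<in>S. \<beta> i)" using S by (rule conjI)
  fix S' assume a: "S' \<subseteq> {1..t} \<and> x = (\<Sum>i\<in>S'. \<beta> i)"
  then have e: "(\<Sum>i\<in>S'. \<beta> i) = (\<Sum>i\<in>S. \<beta> i)" using S(2) by (metis)
  show "S' = S" by (rule basis_unique[OF c b conjunct1[OF a] S(1) e])
qed

lemma crd_spec:
  fixes \<beta> :: "nat \<Rightarrow> 'a::field"
  assumes c: "(1::'a) + 1 = 0" and b: "f2_basis t \<beta>"
  shows "crd t \<beta> x \<subseteq> {1..t}" "x = (\<Sum>i\<in>crd t \<beta> x. \<beta> i)"
proof -
  have "\<forall>x::'a. \<exists>S\<subseteq>{1..t}. x = (\<Sum>i\<in>S. \<beta> i)" using b unfolding f2_basis_def by (rule conjunct2)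
  then obtain S where S: "S \<subseteq> {1..t}" "x = (\<Sum>i\<in>S. \<beta> i)" by blast
  have e: "crd t \<beta> x = S" by (rule crd_eq[OF c b S])
  show "crd t \<beta> x \<subseteq> {1..t}" unfolding e by (rule S(1))
  show "x = (\<Sum>i\<in>crd t \<beta> x. \<beta> i)" unfolding e by (rule S(2))
qed

lemma Tf_add:
  fixes \<beta> :: "nat \<Rightarrow> 'a::field"
  assumes c: "(1::'a) + 1 = 0" and b: "f2_basis t \<beta>"
  shows "Tf t \<beta> (x + y) = Tf t \<beta> x + Tf t \<beta> y"
proof -
  let ?X = "crd t \<beta> x" and ?Y = "crd t \<beta> y"
  have f: "finite ?X" "finite ?Y"
    by (rule finite_subset[OF crd_spec(1)[OF c b]], simp)+
  have h1: "x + y = (\<Sum>i\<in>(?X - ?Y) \<union> (?Y - ?X). \<beta> i)"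
    using sum_symdiff[OF c f, of \<beta>] crd_spec(2)[OF c b, of x, symmetric] crd_spec(2)[OF c b, of y, symmetric] by simp
  have h2: "(?X - ?Y) \<union> (?Y - ?X) \<subseteq> {1..t}" using crd_spec(1)[OF c b, of x] crd_spec(1)[OF c b, of y] by auto
  have e: "crd t \<beta> (x + y) = (?X - ?Y) \<union> (?Y - ?X)" by (rule crd_eq[OF c b h2 h1])
  show ?thesis unfolding Tf_def e by (cases "1 \<in> ?X"; cases "1 \<in> ?Y") simp_all
qed

lemma Tf_zero:
  fixes \<beta> :: "nat \<Rightarrow> 'a::field"
  assumes c: "(1::'a) + 1 = 0" and b: "f2_basis t \<beta>"
  shows "Tf t \<beta> 0 = 0"
proof -
  have "crd t \<beta> 0 = {}" by (rule crd_eq[OF c b]) auto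
  then show ?thesis by (simp add: Tf_def)
qed

lemma Tf_sum:
  fixes \<beta> :: "nat \<Rightarrow> 'a::field"
  assumes c: "(1::'a) + 1 = 0" and b: "f2_basis t \<beta>" and "finite S"
  shows "Tf t \<beta> (\<Sum>i\<in>S. f i) = (\<Sum>i\<in>S. Tf t \<beta> (f i))"
  using assms(3) by (induction S rule: finite_induct) (simp_all add: Tf_zero[OF c b] Tf_add[OF c b])

lemma Tf_beta1:
  fixes \<beta> :: "nat \<Rightarrow> 'a::field"
  assumes c: "(1::'a) + 1 = 0" and b: "f2_basis t \<beta>" and t1: "t \<ge> 1"
  shows "Tf t \<beta> (\<beta> 1) = 1"
proof -
  have "crd t \<beta> (\<beta> 1) = {1}" by (rule crd_eq[OF c b]) (use t1 in auto)
  then show ?thesis by (simp add: Tf_def)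
qed

lemma bit_self: "(a::bit) + a = 0"
  by (cases a) simp_all



lemma upper_scheme:
  fixes A :: "'a::{field,finite} set" and a0 :: 'a and z :: "nat \<Rightarrow> 'a"
  assumes c: "(1::'a) + 1 = 0" and cardF: "card (UNIV::'a set) = 2 ^ t" and t1: "t \<ge> 1"
    and cardA: "card A = n" and r2: "k + 2 \<le> n" and a0A: "a0 \<in> A"
    and bas: "f2_basis t (\<lambda>i. a0 - z i)"
    and gdef: "g = (\<lambda>i. smult (a0 - z i) [:- z i, 1:])"
  shows "\<exists>b q R. linear_repair_scheme A (rs_code A k) a0 b q R \<and> bandwidth A a0 b \<le> (n - 1) * (t - 1)"
proof -
  define \<beta> where "\<beta> = (\<lambda>i. a0 - z i)"
  have b: "f2_basis t \<beta>" using bas by (simp add: \<beta>_def)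
  have gpoly: "poly (g i) x = \<beta> i * (x - z i)" for i x by (simp add: gdef \<beta>_def algebra_simps)
  have fA: "finite A" by simp
  define muA where "muA = mu A"
  have munz: "muA x \<noteq> 0" for x by (simp add: muA_def mu_nz)
  define cc where "cc i = \<beta> i * \<beta> i / muA a0" for i
  have gc: "poly (g i) a0 / muA a0 = cc i" for i by (simp add: gpoly cc_def \<beta>_def)
  define T where "T = Tf t \<beta>"
  have Tadd: "T (x + y) = T x + T y" for x y unfolding T_def by (rule Tf_add[OF c b])
  have Tsum: "T (\<Sum>i\<in>S. f i) = (\<Sum>i\<in>S. T (f i))" if "finite S" for S and f :: "_ \<Rightarrow> 'a"
    unfolding T_def by (rule Tf_sum[OF c b that])
  have Tb1: "T (\<beta> 1) = 1" unfolding T_def by (rule Tf_beta1[OF c b t1])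
  have span: "\<exists>S\<subseteq>{1..t}. y = (\<Sum>i\<in>S. cc i)" for y
  proof -
    obtain s where s: "y * muA a0 = s * s" using sq_surj[OF c] by blast
    have "s = (\<Sum>i\<in>crd t \<beta> s. \<beta> i)" "crd t \<beta> s \<subseteq> {1..t}" using crd_spec[OF c b] by auto
    then have "s * s = (\<Sum>i\<in>crd t \<beta> s. \<beta> i * \<beta> i)"
      using sq_sum[OF c, of "crd t \<beta> s" \<beta>] finite_subset[of "crd t \<beta> s" "{1..t}"] by simp
    then have "y = (\<Sum>i\<in>crd t \<beta> s. \<beta> i * \<beta> i) / muA a0" using s munz[of a0]
      by (metis nonzero_mult_div_cancel_right)
    then have "y = (\<Sum>i\<in>crd t \<beta> s. cc i)" by (simp add: cc_def sum_divide_distrib)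
    then show ?thesis using \<open>crd t \<beta> s \<subseteq> {1..t}\<close> by blast
  qed
  define Mv where "Mv x = restrict (\<lambda>i. T (cc i * x)) {1..t}" for x
  have Mv_inj: "inj Mv"
  proof (rule injI)
    fix x y assume e: "Mv x = Mv y"
    define w where "w = x + y"
    have Tw: "T (cc i * w) = 0" if "i \<in> {1..t}" for i
    proof -
      have "T (cc i * x) = T (cc i * y)" using fun_cong[OF e, of i] that by (simp add: Mv_def)
      then show ?thesis by (simp add: w_def distrib_left Tadd bit_self)
    qed
    have TY: "T (Y * w) = 0" for Y
    proof -
      obtain S where S: "S \<subseteq> {1..t}" "Y = (\<Sum>i\<in>S. cc i)" using span by blast
      have fS: "finite S" using S(1) by (rule finite_subset) simp
      have "T (Y * w) = T (\<Sum>i\<in>S. cc i * w)" by (simp add: S(2) sum_distrib_right)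
      also have "\<dots> = (\<Sum>i\<in>S. T (cc i * w))" by (rule Tsum[OF fS])
      also have "\<dots> = 0" using Tw S(1) by (intro sum.neutral) auto
      finally show ?thesis .
    qed
    have "w = 0"
    proof (rule ccontr)
      assume "w \<noteq> 0"
      then have "T (\<beta> 1 / w * w) = T (\<beta> 1)" by simp
      then show False using TY[of "\<beta> 1 / w"] Tb1 by simp
    qed
    then show "x = y" using c2_eq[OF c] by (simp add: w_def)
  qed
  let ?P = "PiE {1..t} (\<lambda>_. UNIV :: bit set)"
  have Mv_range: "range Mv = ?P"
  proof (rule card_subset_eq)
    show "finite ?P" by (rule finite_PiE) (auto simp: finite_bit)
    show "range Mv \<subseteq> ?P" by (auto simp: Mv_def)
    have "card (range Mv) = 2 ^ t" using Mv_inj cardF by (simp add: card_image)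
    moreover have "card ?P = 2 ^ t" by (simp add: card_bitvec)
    ultimately show "card (range Mv) = card ?P" by simp
  qed
  define Minv where "Minv = inv Mv"
  have Minv_Mv: "Minv (Mv x) = x" for x unfolding Minv_def by (rule inv_f_f[OF Mv_inj])
  have Mv_Minv: "Mv (Minv u) = u" if "u \<in> ?P" for u
    unfolding Minv_def using that Mv_range by (metis f_inv_into_f)
  have Minv_add: "Minv (restrict (\<lambda>i. U i + W i) {1..t}) = Minv (restrict U {1..t}) + Minv (restrict W {1..t})"
    for U W
  proof -
    define x where "x = Minv (restrict U {1..t})"
    define y where "y = Minv (restrict W {1..t})"
    have "Mv x = restrict U {1..t}" unfolding x_def by (rule Mv_Minv) simp
    then have xU: "T (cc i * x) = U i" if "i \<in> {1..t}" for i
    proof -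
      have "Mv x i = restrict U {1..t} i" using \<open>Mv x = restrict U {1..t}\<close> by simp
      then show ?thesis using that unfolding Mv_def restrict_def by simp
    qed
    have "Mv y = restrict W {1..t}" unfolding y_def by (rule Mv_Minv) simp
    then have yW: "T (cc i * y) = W i" if "i \<in> {1..t}" for i
    proof -
      have "Mv y i = restrict W {1..t} i" using \<open>Mv y = restrict W {1..t}\<close> by simp
      then show ?thesis using that unfolding Mv_def restrict_def by simp
    qed
    have "Mv (x + y) = restrict (\<lambda>i. U i + W i) {1..t}"
      unfolding Mv_def by (rule restrict_ext) (simp add: distrib_left Tadd xU yW)
    then have "Minv (restrict (\<lambda>i. U i + W i) {1..t}) = Minv (Mv (x + y))" by simp
    also have "\<dots> = x + y" by (rule Minv_Mv)
    finally show ?thesis by (simp add: x_def y_def)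
  qed
  define \<delta> where "\<delta> \<alpha> = \<alpha> - a0" for \<alpha>
  define Sn where "Sn \<alpha> = crd t \<beta> (\<delta> \<alpha>)" for \<alpha>
  define m where "m \<alpha> = Min (Sn \<alpha>)" for \<alpha>
  have Sn_sub: "Sn \<alpha> \<subseteq> {1..t}" for \<alpha> unfolding Sn_def by (rule crd_spec(1)[OF c b])
  have Sn_fin: "finite (Sn \<alpha>)" for \<alpha> using Sn_sub[of \<alpha>] by (rule finite_subset) simp
  have Sn_sum: "\<delta> \<alpha> = (\<Sum>i\<in>Sn \<alpha>. \<beta> i)" for \<alpha> unfolding Sn_def by (rule crd_spec(2)[OF c b])
  have m_in: "m \<alpha> \<in> Sn \<alpha>" if "\<alpha> \<in> A - {a0}" for \<alpha>
  proof -
    have "Sn \<alpha> \<noteq> {}"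
    proof
      assume "Sn \<alpha> = {}"
      then have "\<delta> \<alpha> = 0" using Sn_sum[of \<alpha>] by simp
      then show False using that by (simp add: \<delta>_def)
    qed
    then show ?thesis unfolding m_def using Sn_fin by (rule Min_in[rotated])
  qed
  have m_t: "m \<alpha> \<in> {1..t}" if "\<alpha> \<in> A - {a0}" for \<alpha> using m_in[OF that] Sn_sub by blast
  have gval: "poly (g i) \<alpha> = \<beta> i * \<beta> i + \<delta> \<alpha> * \<beta> i" for i \<alpha>
    by (simp add: gpoly \<delta>_def \<beta>_def algebra_simps)
  have gm: "poly (g (m \<alpha>)) \<alpha> = (\<Sum>i\<in>Sn \<alpha> - {m \<alpha>}. poly (g i) \<alpha>)" if "\<alpha> \<in> A - {a0}" for \<alpha>
  proof -
    have "(\<Sum>i\<in>Sn \<alpha>. poly (g i) \<alpha>) = (\<Sum>i\<in>Sn \<alpha>. \<beta> i * \<beta> i) + \<delta> \<alpha> * (\<Sum>i\<in>Sn \<alpha>. \<beta> i)"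
      by (simp add: gval sum.distrib sum_distrib_left)
    also have "\<dots> = \<delta> \<alpha> * \<delta> \<alpha> + \<delta> \<alpha> * \<delta> \<alpha>"
      using sq_sum[OF c Sn_fin[of \<alpha>], of \<beta>] Sn_sum[of \<alpha>] by simp
    also have "\<dots> = 0" by (rule c2_self[OF c])
    finally have z: "(\<Sum>i\<in>Sn \<alpha>. poly (g i) \<alpha>) = 0" .
    have "(\<Sum>i\<in>Sn \<alpha>. poly (g i) \<alpha>) = poly (g (m \<alpha>)) \<alpha> + (\<Sum>i\<in>Sn \<alpha> - {m \<alpha>}. poly (g i) \<alpha>)"
      using m_in[OF that] Sn_fin by (simp add: sum.remove)
    then show ?thesis using z c2_eq[OF c] by simp
  qed
  define idx where "idx mm j = (if j + 1 < mm then j + 1 else j + 2)" for mm j :: nat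
  define jdx where "jdx mm i = (if i < mm then i - 1 else i - 2)" for mm i :: nat
  have ij: "jdx mm i < t - 1 \<and> idx mm (jdx mm i) = i" if "mm \<in> {1..t}" "i \<in> {1..t}" "i \<noteq> mm" for mm i
    using that by (auto simp: idx_def jdx_def)
  define bw where "bw = (\<lambda>_::'a. t - 1)"
  define q where "q \<alpha> j x = T (x * (poly (g (idx (m \<alpha>) j)) \<alpha> / muA \<alpha>))" for \<alpha> j x
  define Bf where "Bf \<alpha> i e = (if i = m \<alpha> then (\<Sum>i'\<in>Sn \<alpha> - {m \<alpha>}. e (jdx (m \<alpha>) i')) else e (jdx (m \<alpha>) i))"
    for \<alpha> i and e :: "nat \<Rightarrow> bit"
  define R where "R d = Minv (restrict (\<lambda>i. \<Sum>\<alpha>\<in>A - {a0}. Bf \<alpha> i (d \<alpha>)) {1..t})" for d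
  have qadd: "q \<alpha> j (x + y) = q \<alpha> j x + q \<alpha> j y" for \<alpha> j x y
    unfolding q_def distrib_right by (rule Tadd)
  have Radd: "R (\<lambda>\<alpha> j. d \<alpha> j + e \<alpha> j) = R d + R e" for d e
  proof -
    have B: "Bf \<alpha> i (\<lambda>j. d \<alpha> j + e \<alpha> j) = Bf \<alpha> i (d \<alpha>) + Bf \<alpha> i (e \<alpha>)" for \<alpha> i
      by (cases "i = m \<alpha>") (simp_all only: Bf_def if_True if_False sum.distrib simp_thms)
    have S: "(\<Sum>\<alpha>\<in>A - {a0}. Bf \<alpha> i (\<lambda>j. d \<alpha> j + e \<alpha> j))
        = (\<Sum>\<alpha>\<in>A - {a0}. Bf \<alpha> i (d \<alpha>)) + (\<Sum>\<alpha>\<in>A - {a0}. Bf \<alpha> i (e \<alpha>))" for i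
      by (simp only: B sum.distrib)
    show ?thesis unfolding R_def by (simp only: S Minv_add)
  qed
  have rec: "R (download A a0 bw q cw) = cw a0" if cw: "cw \<in> rs_code A k" for cw
  proof -
    obtain f where f: "cw = (\<lambda>\<alpha>. poly f \<alpha>)" "\<forall>i\<ge>k. coeff f i = 0"
      using cw unfolding rs_code_def by blast
    have degfg: "degree (f * g i) < card A - 1" for i
    proof (cases "f = 0")
      case True
      then show ?thesis using r2 cardA by simp
    next
      case False
      have k1: "k \<ge> 1"
      proof (rule ccontr)
        assume "\<not> k \<ge> 1"
        then have "\<forall>i. coeff f i = 0" using f(2) by simp
        then have "f = 0" by (simp add: poly_eqI)
        then show False using False by simp
      qed
      have "degree f \<le> k - 1" using f(2) by (intro degree_le) auto
      moreover have "degree (g i) \<le> 1" unfolding gdef by (rule order.trans[OF degree_smult_le]) simp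
      ultimately have "degree (f * g i) \<le> k" using degree_mult_le[of f "g i"] k1 by linarith
      then show ?thesis using r2 cardA by linarith
    qed
    have node: "Bf \<alpha> i (download A a0 bw q cw \<alpha>) = T (poly f \<alpha> * (poly (g i) \<alpha> / muA \<alpha>))"
      if \<alpha>: "\<alpha> \<in> A - {a0}" and i: "i \<in> {1..t}" for \<alpha> i
    proof -
      have dl: "download A a0 bw q cw \<alpha> j = q \<alpha> j (poly f \<alpha>)" if "j < t - 1" for j
        using \<alpha> that by (simp add: download_def bw_def f(1))
      have one: "download A a0 bw q cw \<alpha> (jdx (m \<alpha>) i') = T (poly f \<alpha> * (poly (g i') \<alpha> / muA \<alpha>))"
        if "i' \<in> {1..t}" "i' \<noteq> m \<alpha>" for i'
        using ij[OF m_t[OF \<alpha>] that] dl by (simp add: q_def)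
      show ?thesis
      proof (cases "i = m \<alpha>")
        case False
        then show ?thesis using one[OF i False] by (simp add: Bf_def)
      next
        case True
        have "Bf \<alpha> i (download A a0 bw q cw \<alpha>) = (\<Sum>i'\<in>Sn \<alpha> - {m \<alpha>}. T (poly f \<alpha> * (poly (g i') \<alpha> / muA \<alpha>)))"
          unfolding Bf_def if_P[OF True]
        proof (rule sum.cong[OF refl])
          fix i' assume "i' \<in> Sn \<alpha> - {m \<alpha>}"
          then have "i' \<in> {1..t}" "i' \<noteq> m \<alpha>" using Sn_sub[of \<alpha>] by auto
          then show "download A a0 bw q cw \<alpha> (jdx (m \<alpha>) i') = T (poly f \<alpha> * (poly (g i') \<alpha> / muA \<alpha>))"
            by (rule one)
        qed
        also have "\<dots> = T (\<Sum>i'\<in>Sn \<alpha> - {m \<alpha>}. poly f \<alpha> * (poly (g i') \<alpha> / muA \<alpha>))"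
          by (rule Tsum[symmetric]) (simp add: Sn_fin)
        also have "(\<Sum>i'\<in>Sn \<alpha> - {m \<alpha>}. poly f \<alpha> * (poly (g i') \<alpha> / muA \<alpha>))
            = poly f \<alpha> * ((\<Sum>i'\<in>Sn \<alpha> - {m \<alpha>}. poly (g i') \<alpha>) / muA \<alpha>)"
          by (simp add: sum_distrib_left sum_divide_distrib)
        also have "\<dots> = poly f \<alpha> * (poly (g i) \<alpha> / muA \<alpha>)" using gm[OF \<alpha>] True by simp
        finally show ?thesis .
      qed
    qed
    have tot: "(\<Sum>\<alpha>\<in>A - {a0}. Bf \<alpha> i (download A a0 bw q cw \<alpha>)) = T (cc i * poly f a0)"
      if i: "i \<in> {1..t}" for i
    proof -
      have "(\<Sum>\<alpha>\<in>A - {a0}. Bf \<alpha> i (download A a0 bw q cw \<alpha>))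
          = (\<Sum>\<alpha>\<in>A - {a0}. T (poly f \<alpha> * (poly (g i) \<alpha> / muA \<alpha>)))"
        using node i by (intro sum.cong) auto
      also have "\<dots> = T (\<Sum>\<alpha>\<in>A - {a0}. poly f \<alpha> * (poly (g i) \<alpha> / muA \<alpha>))"
        by (rule Tsum[symmetric]) simp
      also have "(\<Sum>\<alpha>\<in>A - {a0}. poly f \<alpha> * (poly (g i) \<alpha> / muA \<alpha>)) = poly f a0 * (poly (g i) a0 / muA a0)"
      proof -
        have "(\<Sum>\<alpha>\<in>A. poly (f * g i) \<alpha> / mu A \<alpha>) = 0" by (rule dual_rel[OF fA degfg])
        then have "(\<Sum>\<alpha>\<in>A. poly f \<alpha> * (poly (g i) \<alpha> / muA \<alpha>)) = 0" by (simp add: muA_def)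
        then have "poly f a0 * (poly (g i) a0 / muA a0) + (\<Sum>\<alpha>\<in>A - {a0}. poly f \<alpha> * (poly (g i) \<alpha> / muA \<alpha>)) = 0"
          using a0A by (simp add: sum.remove)
        then show ?thesis using c2_eq[OF c] by (metis add.commute)
      qed
      also have "poly f a0 * (poly (g i) a0 / muA a0) = cc i * poly f a0" by (simp add: gc)
      finally show ?thesis .
    qed
    have "restrict (\<lambda>i. \<Sum>\<alpha>\<in>A - {a0}. Bf \<alpha> i (download A a0 bw q cw \<alpha>)) {1..t} = Mv (poly f a0)"
      unfolding Mv_def by (rule restrict_ext) (rule tot)
    then show ?thesis unfolding R_def using Minv_Mv f(1) by simp
  qed
  have "linear_repair_scheme A (rs_code A k) a0 bw q R"
    unfolding linear_repair_scheme_def using qadd Radd rec by blast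
  moreover have "bandwidth A a0 bw = (n - 1) * (t - 1)"
    using a0A cardA by (simp add: bandwidth_def bw_def)
  ultimately have "linear_repair_scheme A (rs_code A k) a0 bw q R \<and> bandwidth A a0 bw \<le> (n - 1) * (t - 1)"
    by simp
  then show ?thesis by blast
qed


theorem theorem2:
  fixes t n k :: nat and A :: "'a::{field,finite} set" and a0 :: 'a and z :: "nat \<Rightarrow> 'a"
  assumes char2: "(1::'a) + 1 = 0"
    and cardF: "card (UNIV :: 'a set) = 2 ^ t"
    and t1: "t \<ge> 1"
    and cardA: "card A = n"
    and r2: "k + 2 \<le> n"
    and a0A: "a0 \<in> A"
    and basis: "f2_basis t (\<lambda>i. a0 - z i)"
  defines "g \<equiv> (\<lambda>i. smult (a0 - z i) [:- z i, 1:])"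
  shows "(\<forall>i\<in>{1..t}. degree (g i) \<le> n - k - 1)
       \<and> f2_rank ((\<lambda>i. poly (g i) a0) ` {1..t}) = t
       \<and> (\<Sum>\<alpha>\<in>A - {a0}. f2_rank ((\<lambda>i. poly (g i) \<alpha>) ` {1..t})) \<le> (n - 1) * (t - 1)
       \<and> (\<exists>b q R. linear_repair_scheme A (rs_code A k) a0 b q R
                 \<and> bandwidth A a0 b \<le> (n - 1) * (t - 1))
       \<and> (n = 2 ^ t \<and> n - k = 2 \<longrightarrow>
           (\<forall>a1\<in>A. \<forall>b q R. linear_repair_scheme A (rs_code A k) a1 b q R
                 \<longrightarrow> bandwidth A a1 b \<ge> (n - 1) * (t - 1)))"
proof -
  define \<beta> where "\<beta> = (\<lambda>i. a0 - z i)"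
  have b: "f2_basis t \<beta>" using basis by (simp add: \<beta>_def)
  have geq: "g = (\<lambda>i. smult (a0 - z i) [:- z i, 1:])" by (simp add: g_def)
  have gpoly: "poly (g i) x = \<beta> i * (x - z i)" for i x by (simp add: g_def \<beta>_def algebra_simps)
  have P1: "\<forall>i\<in>{1..t}. degree (g i) \<le> n - k - 1"
  proof
    fix i
    have "degree (g i) \<le> 1" unfolding g_def by (rule order.trans[OF degree_smult_le]) simp
    then show "degree (g i) \<le> n - k - 1" using r2 by linarith
  qed
  have P2: "f2_rank ((\<lambda>i. poly (g i) a0) ` {1..t}) = t"
  proof -
    have "(\<lambda>i. poly (g i) a0) ` {1..t} = (\<lambda>i. \<beta> i * \<beta> i) ` {1..t}"
      by (rule image_cong) (simp_all add: gpoly \<beta>_def)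
    then show ?thesis using rank_sq[OF char2 b cardF] by simp
  qed
  have P3: "(\<Sum>\<alpha>\<in>A - {a0}. f2_rank ((\<lambda>i. poly (g i) \<alpha>) ` {1..t})) \<le> (n - 1) * (t - 1)"
  proof -
    have "f2_rank ((\<lambda>i. poly (g i) \<alpha>) ` {1..t}) \<le> t - 1" if "\<alpha> \<in> A - {a0}" for \<alpha>
    proof -
      have "(\<lambda>i. poly (g i) \<alpha>) ` {1..t} = (\<lambda>i. \<beta> i * \<beta> i + (\<alpha> - a0) * \<beta> i) ` {1..t}"
        by (rule image_cong) (simp_all add: gpoly \<beta>_def algebra_simps)
      moreover have "\<alpha> - a0 \<noteq> 0" using that by simp
      ultimately show ?thesis using rank_L[OF char2 cardF t1, of "\<alpha> - a0" \<beta>] by simp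
    qed
    then have "(\<Sum>\<alpha>\<in>A - {a0}. f2_rank ((\<lambda>i. poly (g i) \<alpha>) ` {1..t})) \<le> (\<Sum>\<alpha>\<in>A - {a0}. t - 1)"
      by (rule sum_mono)
    then have "(\<Sum>\<alpha>\<in>A - {a0}. f2_rank ((\<lambda>i. poly (g i) \<alpha>) ` {1..t})) \<le> card (A - {a0}) * (t - 1)"
      by simp
    then show ?thesis using cardA a0A by simp
  qed
  have P4: "\<exists>b q R. linear_repair_scheme A (rs_code A k) a0 b q R \<and> bandwidth A a0 b \<le> (n - 1) * (t - 1)"
    by (rule upper_scheme[OF char2 cardF t1 cardA r2 a0A basis geq])
  have P5: "n = 2 ^ t \<and> n - k = 2 \<longrightarrow>
           (\<forall>a1\<in>A. \<forall>b q R. linear_repair_scheme A (rs_code A k) a1 b q R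
                 \<longrightarrow> bandwidth A a1 b \<ge> (n - 1) * (t - 1))"
  proof (intro impI ballI allI)
    fix a1 b q R
    assume h: "n = 2 ^ t \<and> n - k = 2" and a1: "a1 \<in> A" and s: "linear_repair_scheme A (rs_code A k) a1 b q R"
    have kk: "k + 2 = 2 ^ t" using h r2 by linarith
    have cA: "card A = 2 ^ t" using h cardA by simp
    show "bandwidth A a1 b \<ge> (n - 1) * (t - 1)"
      using lower_bound[OF char2 cardF t1 cA kk a1 s] h by simp
  qed
  show ?thesis using P1 P2 P3 P4 P5 by blast
qed

end
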